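(* Let $r\geq 1$. Suppose that $S_N$ admits the weak global Edgeworth expansion of order $r$ for all $f\in F^1_0$, with asymptotic mean $A=0$ and leading polynomial $P_{0,g}\equiv 1$: there are polynomials $P_{1,g},\dots,P_{r,g}$ with $\mathbb{E}(f(S_N))=\sum_{p=0}^r N^{-p/2}\int P_{p,g}(z)\mathfrak{n}(z)f(z\sqrt{N})\,dz+C^1_0(f)\,o(N^{-(r+1)/2})$ for all $f\in F^1_0$, the $o$-term independent of $f$. Let $(\epsilon_N)$ be positive reals with $\epsilon_N\to0$ and $\epsilon_N N^{r/2}\to\infty$. Then $$\frac{\sqrt{N}}{2\epsilon_N}\,\mathbb{P}\big(S_N\in(u-\epsilon_N,u+\epsilon_N)\big)=\frac{1}{\sqrt{2\pi\sigma^2}}e^{-\frac{u^2}{2N\sigma^2}}+o(1)$$ uniformly in $u\in\mathbb{R}$.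
   Context: $X_1,X_2,\dots$ are real random variables, $S_N=\sum_{n=1}^N X_n$, $\sigma^2>0$, $\mathfrak{n}(y)=\frac{1}{\sqrt{2\pi\sigma^2}}e^{-y^2/(2\sigma^2)}$. $F^1_0$ is the space of continuously differentiable $f:\mathbb{R}\to\mathbb{C}$ with $C^1_0(f)=\max(\|f\|_{L^1},\|f'\|_{L^1})+\|f\|_{L^1}<\infty$. The asymptotic mean $A=\lim_N\mathbb{E}(S_N/N)$ is assumed to be $0$. *)

theory Defs
  imports "HOL-Probability.Probability" "HOL-Computational_Algebra.Polynomial"
begin

definition gauss_dens :: "real \<Rightarrow> real \<Rightarrow> real" where
  "gauss_dens sigma2 y = 1 / sqrt (2 * pi * sigma2) * exp (- (y^2) / (2 * sigma2))"

definition F10 :: "(real \<Rightarrow> complex) \<Rightarrow> bool" where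
  "F10 f \<longleftrightarrow> (\<exists>f'. (\<forall>x. (f has_vector_derivative f' x) (at x))
      \<and> continuous_on UNIV f' \<and> integrable lborel f \<and> integrable lborel f')"

definition C10 :: "(real \<Rightarrow> complex) \<Rightarrow> real" where
  "C10 f = max (LINT x|lborel. norm (f x)) (LINT x|lborel. norm (vector_derivative f (at x)))
           + (LINT x|lborel. norm (f x))"

end

theory Submission
  imports Defs
begin


definition mclamp :: "real \<Rightarrow> real" where "mclamp t = max 0 (min 1 t)"
definition hstep :: "real \<Rightarrow> real" where "hstep t = 3 * (mclamp t)^2 - 2 * (mclamp t)^3"
definition hstep' :: "real \<Rightarrow> real" where "hstep' t = 6 * mclamp t * (1 - mclamp t)"

lemma cont_mclamp: "continuous_on UNIV mclamp"
  unfolding mclamp_def by (intro continuous_intros)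
lemma cont_hstep: "continuous_on UNIV hstep"
  unfolding hstep_def by (intro continuous_intros cont_mclamp[THEN continuous_on_subset]) auto
lemma cont_hstep': "continuous_on UNIV hstep'"
  unfolding hstep'_def by (intro continuous_intros cont_mclamp[THEN continuous_on_subset]) auto

lemma hstep_bounds: "0 \<le> hstep t" "hstep t \<le> 1"
proof -
  have m: "0 \<le> mclamp t" "mclamp t \<le> 1" by (auto simp: mclamp_def)
  have "hstep t = (mclamp t)^2 * (3 - 2 * mclamp t)" unfolding hstep_def
    by (simp add: power2_eq_square power3_eq_cube algebra_simps)
  then show "0 \<le> hstep t" using m by simp
  have "(1 - mclamp t)^2 * (1 + 2 * mclamp t) \<ge> 0" using m by simp
  then show "hstep t \<le> 1" unfolding hstep_def by (simp add: algebra_simps power2_eq_square power3_eq_cube)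
qed

lemma hstep'_bounds: "0 \<le> hstep' t" "hstep' t \<le> 3/2"
proof -
  have m: "0 \<le> mclamp t" "mclamp t \<le> 1" by (auto simp: mclamp_def)
  show "0 \<le> hstep' t" unfolding hstep'_def using m by simp
  have "(2 * mclamp t - 1)^2 \<ge> 0" by simp
  then show "hstep' t \<le> 3/2" unfolding hstep'_def by (simp add: algebra_simps power2_eq_square)
qed

lemma hstep_le0: "t \<le> 0 \<Longrightarrow> hstep t = 0" and hstep'_le0: "t \<le> 0 \<Longrightarrow> hstep' t = 0"
  by (auto simp: hstep_def hstep'_def mclamp_def)
lemma hstep_ge1: "t \<ge> 1 \<Longrightarrow> hstep t = 1" and hstep'_ge1: "t \<ge> 1 \<Longrightarrow> hstep' t = 0"
  by (auto simp: hstep_def hstep'_def mclamp_def)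

lemma deriv0_quadratic:
  fixes f :: "real \<Rightarrow> real"
  assumes "\<And>s. \<bar>f s - f t\<bar> \<le> K * (s - t)^2"
  shows "(f has_real_derivative 0) (at t)"
  unfolding DERIV_def
proof (rule Lim_null_comparison)
  show "\<forall>\<^sub>F h in at 0. norm ((f (t + h) - f t) / h) \<le> \<bar>K\<bar> * \<bar>h\<bar>"
  proof (rule always_eventually, intro allI)
    fix h :: real
    show "norm ((f (t + h) - f t) / h) \<le> \<bar>K\<bar> * \<bar>h\<bar>"
    proof (cases "h = 0")
      case False
      have "\<bar>f (t+h) - f t\<bar> \<le> K * h^2" using assms[of "t+h"] by simp
      also have "\<dots> \<le> \<bar>K\<bar> * \<bar>h\<bar> * \<bar>h\<bar>" by (simp add: power2_eq_square abs_mult_self_eq mult.assoc mult_right_mono)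
      finally show ?thesis using False by (simp add: divide_le_eq)
    qed simp
  qed
  show "((\<lambda>h. \<bar>K\<bar> * \<bar>h\<bar>) \<longlongrightarrow> 0) (at 0)"
    by (rule tendsto_eq_intros, rule tendsto_const, rule tendsto_eq_intros, rule tendsto_ident_at) auto
qed


lemma hstep_mid: "0 < t \<Longrightarrow> t < 1 \<Longrightarrow> hstep t = 3*t^2 - 2*t^3 \<and> hstep' t = 6*t - 6*t^2"
  by (simp add: hstep_def hstep'_def mclamp_def power2_eq_square algebra_simps)

lemma hstep_small: "\<bar>hstep s\<bar> \<le> 3 * s^2"
proof (cases "s \<le> 0")
  case True then show ?thesis by (simp add: hstep_le0)
next
  case False
  show ?thesis
  proof (cases "s < 1")
    case True
    then have "hstep s = s^2 * (3 - 2 * s)" using False hstep_mid[of s]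
      by (simp add: power2_eq_square power3_eq_cube algebra_simps)
    moreover have "s^2 * (3 - 2 * s) \<le> s^2 * 3" using False by (intro mult_left_mono) auto
    moreover have "0 \<le> s^2 * (3 - 2 * s)" using True by simp
    ultimately show ?thesis by simp
  next
    case False2: False
    then have "hstep s = 1" by (simp add: hstep_ge1)
    moreover have "1 \<le> s^2" using False2 by (simp add: one_le_power)
    ultimately show ?thesis by simp
  qed
qed

lemma hstep_big: "\<bar>hstep s - 1\<bar> \<le> 3 * (s - 1)^2"
proof (cases "s \<ge> 1")
  case True then show ?thesis by (simp add: hstep_ge1)
next
  case False
  show ?thesis
  proof (cases "s > 0")
    case True
    then have "1 - hstep s = (1 - s)^2 * (1 + 2 * s)" using False hstep_mid[of s]
      by (simp add: power2_eq_square power3_eq_cube algebra_simps)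
    moreover have "(1 - s)^2 * (1 + 2 * s) \<le> (1 - s)^2 * 3" using False
      by (intro mult_left_mono) auto
    moreover have "0 \<le> (1 - s)^2 * (1 + 2 * s)" using True by simp
    moreover have "(1 - s)^2 = (s-1)^2" by (simp add: power2_commute)
    ultimately show ?thesis by linarith
  next
    case False2: False
    then have "hstep s = 0" by (simp add: hstep_le0)
    moreover have "1 \<le> 1 - s" using False2 by simp
    then have "1 \<le> (1 - s)^2" by (simp add: one_le_power)
    then have "1 \<le> (s - 1)^2" by (simp add: power2_commute)
    ultimately show ?thesis by simp
  qed
qed


lemma hstep_deriv: "(hstep has_real_derivative hstep' t) (at t)"
proof -
  consider "t < 0" | "t = 0" | "0 < t \<and> t < 1" | "t = 1" | "t > 1" by linarith
  then show ?thesis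
  proof cases
    case 1
    have "((\<lambda>_. 0) has_real_derivative hstep' t) (at t)" using 1 by (simp add: hstep'_le0)
    then show ?thesis
      by (rule has_field_derivative_transform_within_open[where S="{..<0}"])
         (use 1 in \<open>auto simp: hstep'_le0 hstep_le0\<close>)
  next
    case 5
    have "((\<lambda>_. 1) has_real_derivative hstep' t) (at t)" using 5 by (simp add: hstep'_ge1)
    then show ?thesis
      by (rule has_field_derivative_transform_within_open[where S="{1<..}"])
         (use 5 in \<open>auto simp: hstep'_ge1 hstep_ge1\<close>)
  next
    case 3
    have "((\<lambda>s. 3 * s^2 - 2 * s^3) has_real_derivative (6 * t - 6 * t^2)) (at t)"
      by (auto intro!: derivative_eq_intros simp: power2_eq_square)
    then have "((\<lambda>s. 3 * s^2 - 2 * s^3) has_real_derivative hstep' t) (at t)"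
      using hstep_mid[of t] 3 by simp
    then show ?thesis
      by (rule has_field_derivative_transform_within_open[where S="{0<..<1}"])
         (use 3 hstep_mid in \<open>auto\<close>)
  next
    case 2
    have "(hstep has_real_derivative 0) (at t)"
      by (rule deriv0_quadratic[where K=3]) (use 2 hstep_small in \<open>simp add: hstep_le0\<close>)
    then show ?thesis using 2 by (simp add: hstep'_le0)
  next
    case 4
    have "(hstep has_real_derivative 0) (at t)"
      by (rule deriv0_quadratic[where K=3]) (use 4 hstep_big in \<open>simp add: hstep_ge1\<close>)
    then show ?thesis using 4 by (simp add: hstep'_ge1)
  qed
qed


definition bump :: "real \<Rightarrow> real \<Rightarrow> real \<Rightarrow> real \<Rightarrow> real" where
  "bump a b c x = hstep ((x - a + c) / c) * hstep ((b + c - x) / c)"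
definition bump' :: "real \<Rightarrow> real \<Rightarrow> real \<Rightarrow> real \<Rightarrow> real" where
  "bump' a b c x = hstep' ((x - a + c) / c) / c * hstep ((b + c - x) / c)
      - hstep ((x - a + c) / c) * hstep' ((b + c - x) / c) / c"

lemma hstep_chain: "(g has_real_derivative g') (at x) \<Longrightarrow>
   ((\<lambda>x. hstep (g x)) has_real_derivative hstep' (g x) * g') (at x)"
  using DERIV_chain2[OF hstep_deriv] by blast

lemma bump_deriv: assumes "c > 0" shows "(bump a b c has_real_derivative bump' a b c x) (at x)"
proof -
  have 1: "((\<lambda>x. hstep ((x - a + c) / c)) has_real_derivative hstep' ((x - a + c) / c) * (1/c)) (at x)"
    by (rule hstep_chain) (use assms in \<open>auto intro!: derivative_eq_intros\<close>)
  have 2: "((\<lambda>x. hstep ((b + c - x) / c)) has_real_derivative hstep' ((b + c - x) / c) * (-1/c)) (at x)"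
    by (rule hstep_chain) (use assms in \<open>auto intro!: derivative_eq_intros\<close>)
  show ?thesis unfolding bump_def[abs_def]
    using DERIV_mult[OF 1 2] assms by (simp add: bump'_def algebra_simps)
qed

lemma cont_bump: assumes "c > 0" shows "continuous_on UNIV (bump a b c)"
  unfolding bump_def[abs_def]
  by (intro continuous_intros continuous_on_compose2[OF cont_hstep]) (use assms in auto)

lemma cont_bump': assumes "c > 0" shows "continuous_on UNIV (bump' a b c)"
  unfolding bump'_def[abs_def]
  by (intro continuous_intros continuous_on_compose2[OF cont_hstep] continuous_on_compose2[OF cont_hstep']) (use assms in auto)

lemma bump_bounds: "0 \<le> bump a b c x" "bump a b c x \<le> 1"
  unfolding bump_def using hstep_bounds
  by (auto intro: mult_nonneg_nonneg mult_le_one)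

lemma bump_out: assumes "c > 0" "x \<notin> {a - c<..<b + c}"
  shows "bump a b c x = 0 \<and> bump' a b c x = 0"
proof -
  have "x \<le> a - c \<or> x \<ge> b + c" using assms by auto
  then show ?thesis
  proof
    assume "x \<le> a - c"
    then have "(x - a + c) / c \<le> 0" using assms by (simp add: divide_le_0_iff)
    then show ?thesis
      by (simp add: bump_def bump'_def hstep_le0 hstep'_le0)
  next
    assume "x \<ge> b + c"
    then have "(b + c - x) / c \<le> 0" using assms by (simp add: divide_le_0_iff)
    then show ?thesis
      by (simp add: bump_def bump'_def hstep_le0 hstep'_le0)
  qed
qed

lemma bump_in: assumes "c > 0" "a \<le> x" "x \<le> b" shows "bump a b c x = 1"
proof -
  have "(x - a + c) / c \<ge> 1" "(b + c - x) / c \<ge> 1" using assms by (simp_all add: le_divide_eq)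
  then show ?thesis by (simp add: bump_def hstep_ge1)
qed

lemma bump'_bound: assumes "c > 0" shows "\<bar>bump' a b c x\<bar> \<le> 3 / c"
proof -
  let ?p = "hstep' ((x - a + c) / c)" and ?q = "hstep ((b + c - x) / c)"
  let ?r = "hstep ((x - a + c) / c)" and ?s = "hstep' ((b + c - x) / c)"
  have "\<bar>bump' a b c x\<bar> \<le> ?p * ?q / c + ?r * ?s / c"
    unfolding bump'_def using hstep_bounds hstep'_bounds assms by (simp add: abs_le_iff)
  also have "\<dots> \<le> (3/2) / c + (3/2) / c"
  proof (intro add_mono divide_right_mono)
    show "?p * ?q \<le> 3/2" using mult_mono[OF hstep'_bounds(2) hstep_bounds(2)] hstep_bounds hstep'_bounds by simp
    show "?r * ?s \<le> 3/2" using mult_mono[OF hstep_bounds(2) hstep'_bounds(2)] hstep_bounds hstep'_bounds by simp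
  qed (use assms in auto)
  finally show ?thesis by simp
qed


lemma integrable_ind_Icc: "integrable lborel (\<lambda>x. K * indicator {A..B::real} x :: real)"
  by (intro integrable_mult_right integrable_real_indicator) (auto simp: emeasure_lborel_Icc_eq)

lemma LINT_ind_Icc: "A \<le> B \<Longrightarrow> (LINT x|lborel. K * indicator {A..B::real} x :: real) = K * (B - A)"
  by (simp add: measure_lborel_Icc)

lemma bsupp_integrable:
  fixes \<phi> :: "real \<Rightarrow> real"
  assumes "continuous_on UNIV \<phi>" "\<And>x. \<bar>\<phi> x\<bar> \<le> K * indicator {A..B} x"
  shows "integrable lborel \<phi>"
proof (rule Bochner_Integration.integrable_bound[OF integrable_ind_Icc[of K A B]])
  show "\<phi> \<in> borel_measurable lborel" using assms(1) borel_measurable_continuous_onI by simp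
  show "AE x in lborel. norm (\<phi> x) \<le> norm (K * indicator {A..B} x)"
  proof (intro always_eventually allI)
    fix x have "\<bar>\<phi> x\<bar> \<le> \<bar>K * indicator {A..B} x\<bar>" using assms(2)[of x] by linarith
    then show "norm (\<phi> x) \<le> norm (K * indicator {A..B} x)" by simp
  qed
qed

lemma bsupp_L1:
  fixes \<phi> :: "real \<Rightarrow> real"
  assumes "continuous_on UNIV \<phi>" "\<And>x. \<bar>\<phi> x\<bar> \<le> K * indicator {A..B} x" "A \<le> B"
  shows "(LINT x|lborel. \<bar>\<phi> x\<bar>) \<le> K * (B - A)"
proof -
  have "(LINT x|lborel. \<bar>\<phi> x\<bar>) \<le> (LINT x|lborel. K * indicator {A..B} x)"
    using bsupp_integrable[OF assms(1,2)] assms(2)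
    by (intro integral_mono integrable_abs integrable_ind_Icc) auto
  then show ?thesis using LINT_ind_Icc[OF assms(3), of K] by linarith
qed

lemma bump_ind: assumes "c > 0" shows "\<bar>bump a b c x\<bar> \<le> 1 * indicator {a - c..b + c} x"
  using bump_bounds[of a b c x] bump_out[OF assms, of x] by (cases "x \<in> {a - c..b + c}") auto

lemma bump'_ind: assumes "c > 0" shows "\<bar>bump' a b c x\<bar> \<le> (3/c) * indicator {a - c..b + c} x"
  using bump'_bound[OF assms, of a b x] bump_out[OF assms, of x] by (cases "x \<in> {a - c..b + c}") auto

lemma bump_integrable: "c > 0 \<Longrightarrow> integrable lborel (bump a b c)"
  by (rule bsupp_integrable[OF cont_bump bump_ind])
lemma bump'_integrable: "c > 0 \<Longrightarrow> integrable lborel (bump' a b c)"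
  by (rule bsupp_integrable[OF cont_bump' bump'_ind])

lemma bump_L1: "c > 0 \<Longrightarrow> a \<le> b \<Longrightarrow> (LINT x|lborel. \<bar>bump a b c x\<bar>) \<le> b - a + 2 * c"
  using bsupp_L1[OF cont_bump bump_ind, of c a b] by simp
lemma bump'_L1: "c > 0 \<Longrightarrow> a \<le> b \<Longrightarrow> (LINT x|lborel. \<bar>bump' a b c x\<bar>) \<le> 3 / c * (b - a + 2 * c)"
proof -
  assume h: "c > 0" "a \<le> b"
  have "(LINT x|lborel. \<bar>bump' a b c x\<bar>) \<le> 3 / c * ((b + c) - (a - c))"
    by (rule bsupp_L1[OF cont_bump' bump'_ind]) (use h in auto)
  also have "(b + c) - (a - c) = b - a + 2 * c" by simp
  finally show ?thesis .
qed

lemma bump_int_upper: "c > 0 \<Longrightarrow> a \<le> b \<Longrightarrow> (LINT x|lborel. bump a b c x) \<le> b - a + 2 * c"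
  using bump_L1[of c a b] bump_bounds by simp

lemma bump_int_lower: assumes "c > 0" "a \<le> b" shows "b - a \<le> (LINT x|lborel. bump a b c x)"
proof -
  have "(LINT x|lborel. 1 * indicator {a..b} x) \<le> (LINT x|lborel. bump a b c x)"
  proof (intro integral_mono integrable_ind_Icc bump_integrable assms)
    fix x show "1 * indicator {a..b} x \<le> bump a b c x"
      using bump_in[OF assms(1)] bump_bounds by (cases "x \<in> {a..b}") auto
  qed
  then show ?thesis using LINT_ind_Icc[OF assms(2), of 1] by simp
qed

definition cbump :: "real \<Rightarrow> real \<Rightarrow> real \<Rightarrow> real \<Rightarrow> complex" where
  "cbump a b c x = complex_of_real (bump a b c x)"

lemma cbump_F10: assumes "c > 0" shows "F10 (cbump a b c)"
  unfolding F10_def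
proof (intro exI[of _ "\<lambda>x. complex_of_real (bump' a b c x)"] conjI allI)
  fix x show "(cbump a b c has_vector_derivative complex_of_real (bump' a b c x)) (at x)"
    unfolding cbump_def[abs_def] by (rule has_vector_derivative_of_real[OF bump_deriv[OF assms]])
  show "continuous_on UNIV (\<lambda>x. complex_of_real (bump' a b c x))"
    by (intro continuous_intros cont_bump'[OF assms])
  show "integrable lborel (cbump a b c)" unfolding cbump_def[abs_def]
    by (rule integrable_bounded_linear[OF bounded_linear_of_real bump_integrable[OF assms]])
  show "integrable lborel (\<lambda>x. complex_of_real (bump' a b c x))"
    by (rule integrable_bounded_linear[OF bounded_linear_of_real bump'_integrable[OF assms]])
qed

lemma cbump_C10: assumes "c > 0" "a \<le> b"
  shows "C10 (cbump a b c) \<le> max (b - a + 2 * c) (3 / c * (b - a + 2 * c)) + (b - a + 2 * c)"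
proof -
  have vd: "vector_derivative (cbump a b c) (at x) = complex_of_real (bump' a b c x)" for x
    unfolding cbump_def[abs_def]
    by (rule vector_derivative_at[OF has_vector_derivative_of_real[OF bump_deriv[OF assms(1)]]])
  have 1: "(LINT x|lborel. norm (cbump a b c x)) = (LINT x|lborel. \<bar>bump a b c x\<bar>)"
    by (simp add: cbump_def)
  have 2: "(LINT x|lborel. norm (vector_derivative (cbump a b c) (at x))) = (LINT x|lborel. \<bar>bump' a b c x\<bar>)"
    by (simp add: vd)
  show ?thesis unfolding C10_def 1 2
    using bump_L1[OF assms] bump'_L1[OF assms] by (intro add_mono max.mono) auto
qed




lemma pow_le_fact_exp: assumes "(x::real) \<ge> 0" shows "x ^ n \<le> fact n * exp x"
proof -
  have s: "(\<lambda>n. x^n /\<^sub>R fact n) sums exp x" by (rule exp_converges)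
  have "sum (\<lambda>n. x^n /\<^sub>R fact n) {n} \<le> suminf (\<lambda>n. x^n /\<^sub>R fact n)"
    by (rule sum_le_suminf) (use s assms in \<open>auto simp: sums_iff\<close>)
  then have "x^n / fact n \<le> exp x" using s by (simp add: sums_iff divide_inverse_commute)
  then show ?thesis by (simp add: divide_le_eq mult.commute)
qed

lemma exp_abs_gauss: fixes z s :: real assumes "s > 0" shows "exp \<bar>z\<bar> * exp (- (z^2) / (2 * s)) \<le> exp (s / 2)"
proof -
  have "\<bar>z\<bar> - z^2 / (2 * s) \<le> s / 2"
  proof -
    have "0 \<le> (\<bar>z\<bar> - s)^2" by (rule zero_le_power2)
    then have "2 * s * \<bar>z\<bar> - z^2 \<le> s^2" by (simp add: power2_eq_square algebra_simps)
    then show ?thesis using assms by (simp add: field_simps power2_eq_square)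
  qed
  then show ?thesis by (simp add: exp_add[symmetric])
qed

lemma poly_gauss_bound:
  assumes "s > 0"
  shows "\<exists>B. \<forall>z. \<bar>poly q z * gauss_dens s z\<bar> \<le> B"
proof -
  define C where "C = 1 / sqrt (2 * pi * s)"
  have C: "C > 0" using assms by (simp add: C_def)
  define K where "K = (\<Sum>i\<le>degree q. \<bar>coeff q i\<bar> * fact i)"
  have "\<bar>poly q z * gauss_dens s z\<bar> \<le> K * C * exp (s / 2)" for z
  proof -
    have "\<bar>poly q z\<bar> \<le> (\<Sum>i\<le>degree q. \<bar>coeff q i\<bar> * \<bar>z\<bar>^i)"
      unfolding poly_altdef by (rule order_trans[OF sum_abs]) (simp add: abs_mult power_abs)
    also have "\<dots> \<le> (\<Sum>i\<le>degree q. \<bar>coeff q i\<bar> * (fact i * exp \<bar>z\<bar>))"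
      by (intro sum_mono mult_left_mono pow_le_fact_exp) auto
    also have "\<dots> = K * exp \<bar>z\<bar>" by (simp add: K_def sum_distrib_right mult.assoc)
    finally have 1: "\<bar>poly q z\<bar> \<le> K * exp \<bar>z\<bar>" .
    have g: "gauss_dens s z = C * exp (- (z^2) / (2 * s))" by (simp add: gauss_dens_def C_def)
    have "\<bar>poly q z * gauss_dens s z\<bar> = \<bar>poly q z\<bar> * (C * exp (- (z^2) / (2 * s)))"
      using C by (simp add: g abs_mult)
    also have "\<dots> \<le> K * exp \<bar>z\<bar> * (C * exp (- (z^2) / (2 * s)))"
      using C by (intro mult_right_mono 1) auto
    also have "\<dots> = K * C * (exp \<bar>z\<bar> * exp (- (z^2) / (2 * s)))" by (simp add: algebra_simps)
    also have "\<dots> \<le> K * C * exp (s / 2)"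
    proof (intro mult_left_mono exp_abs_gauss assms)
      show "0 \<le> K * C" using C unfolding K_def by (intro mult_nonneg_nonneg sum_nonneg) auto
    qed
    finally show ?thesis .
  qed
  then show ?thesis by blast
qed

lemma gauss_deriv: assumes "s > 0" shows "(gauss_dens s has_real_derivative (poly [:0, -1/s:] z * gauss_dens s z)) (at z)"
  unfolding gauss_dens_def[abs_def]
  using assms by (auto intro!: derivative_eq_intros simp: field_simps power2_eq_square)

lemma gauss_lipschitz:
  assumes "s > 0" shows "\<exists>L. \<forall>x y. \<bar>gauss_dens s x - gauss_dens s y\<bar> \<le> L * \<bar>x - y\<bar>"
proof -
  obtain B where B: "\<And>z. \<bar>poly [:0, -1/s:] z * gauss_dens s z\<bar> \<le> B"
    using poly_gauss_bound[OF assms] by blast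
  have "\<bar>gauss_dens s x - gauss_dens s y\<bar> \<le> B * \<bar>x - y\<bar>" if yx: "y < x" for x y
  proof -
    obtain z where "gauss_dens s x - gauss_dens s y = (x - y) * (poly [:0, -1/s:] z * gauss_dens s z)"
      using MVT2[OF yx, of "gauss_dens s" "\<lambda>z. poly [:0, -1/s:] z * gauss_dens s z", OF gauss_deriv[OF assms]] by blast
    then have "\<bar>gauss_dens s x - gauss_dens s y\<bar> = \<bar>x - y\<bar> * \<bar>poly [:0, -1/s:] z * gauss_dens s z\<bar>"
      by (simp add: abs_mult)
    also have "\<dots> \<le> \<bar>x - y\<bar> * B" by (intro mult_left_mono B) auto
    finally show ?thesis by (simp add: mult.commute)
  qed
  note H = this
  have "\<bar>gauss_dens s x - gauss_dens s y\<bar> \<le> B * \<bar>x - y\<bar>" for x y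
  proof (cases x y rule: linorder_cases)
    case less
    then show ?thesis using H[of x y] H[of y x] by (simp add: abs_minus_commute)
  next
    case greater
    then show ?thesis using H[of x y] H[of y x] by (simp add: abs_minus_commute)
  qed simp
  then show ?thesis by blast
qed

lemma cont_gauss: assumes "s > 0" shows "continuous_on UNIV (gauss_dens s)"
  unfolding gauss_dens_def[abs_def] using assms by (intro continuous_intros) auto




lemma gauss_pos: "s > 0 \<Longrightarrow> 0 < gauss_dens s z"
  by (simp add: gauss_dens_def)

lemma gauss_le: assumes "s > 0" shows "gauss_dens s z \<le> 1 / sqrt (2 * pi * s)"
proof -
  have "- (z^2) / (2 * s) \<le> 0" using assms by (simp add: divide_nonpos_pos)
  then have "exp (- (z^2) / (2 * s)) \<le> 1" by simp
  then show ?thesis unfolding gauss_dens_def using assms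
    by (intro mult_left_le) auto
qed

lemma gterm_subst:
  fixes \<phi> :: "real \<Rightarrow> real" assumes "sN > 0"
  shows "(LINT z|lborel. poly q z * gauss_dens s z * \<phi> (z * sN))
       = (1 / sN) * (LINT y|lborel. poly q (y / sN) * gauss_dens s (y / sN) * \<phi> y)"
proof -
  have "(LINT z|lborel. poly q z * gauss_dens s z * \<phi> (z * sN))
     = \<bar>1/sN\<bar> *\<^sub>R (LINT y|lborel. poly q (0 + 1/sN * y) * gauss_dens s (0 + 1/sN * y) * \<phi> ((0 + 1/sN * y) * sN))"
    by (rule lborel_integral_real_affine) (use assms in auto)
  also have "\<dots> = (1 / sN) * (LINT y|lborel. poly q (y / sN) * gauss_dens s (y / sN) * \<phi> y)"
    using assms by simp
  finally show ?thesis .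
qed

lemma gterm_bound:
  fixes \<phi> :: "real \<Rightarrow> real"
  assumes "sN > 0" "s > 0" "\<And>z. \<bar>poly q z * gauss_dens s z\<bar> \<le> B"
    and "continuous_on UNIV \<phi>" "integrable lborel \<phi>"
  shows "integrable lborel (\<lambda>y. poly q (y / sN) * gauss_dens s (y / sN) * \<phi> y)"
    and "\<bar>LINT y|lborel. poly q (y / sN) * gauss_dens s (y / sN) * \<phi> y\<bar> \<le> B * (LINT y|lborel. \<bar>\<phi> y\<bar>)"
proof -
  let ?\<psi> = "\<lambda>y. poly q (y / sN) * gauss_dens s (y / sN) * \<phi> y"
  have pt: "\<bar>?\<psi> y\<bar> \<le> B * \<bar>\<phi> y\<bar>" for y
    using assms(3)[of "y / sN"] by (simp add: abs_mult mult_right_mono)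
  have cont: "continuous_on UNIV ?\<psi>"
    by (intro continuous_intros assms(4) continuous_on_compose2[OF cont_gauss[OF assms(2)]]) (use assms in auto)
  have ib: "integrable lborel (\<lambda>y. B * \<bar>\<phi> y\<bar>)"
    by (intro integrable_mult_right integrable_abs assms(5))
  show int: "integrable lborel ?\<psi>"
  proof (rule Bochner_Integration.integrable_bound[OF ib])
    show "?\<psi> \<in> borel_measurable lborel" using cont borel_measurable_continuous_onI by simp
    show "AE x in lborel. norm (?\<psi> x) \<le> norm (B * \<bar>\<phi> x\<bar>)"
    proof (intro always_eventually allI)
      fix x show "norm (?\<psi> x) \<le> norm (B * \<bar>\<phi> x\<bar>)" using pt[of x] by simp
    qed
  qed
  have "\<bar>LINT y|lborel. ?\<psi> y\<bar> \<le> (LINT y|lborel. \<bar>?\<psi> y\<bar>)" by (rule integral_abs_bound)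
  also have "\<dots> \<le> (LINT y|lborel. B * \<bar>\<phi> y\<bar>)"
    by (intro integral_mono integrable_abs int ib pt)
  also have "\<dots> = B * (LINT y|lborel. \<bar>\<phi> y\<bar>)" by simp
  finally show "\<bar>LINT y|lborel. ?\<psi> y\<bar> \<le> B * (LINT y|lborel. \<bar>\<phi> y\<bar>)" .
qed

lemma main_term:
  fixes \<phi> :: "real \<Rightarrow> real"
  assumes "sN > 0" "s > 0" "L \<ge> 0" "R \<ge> 0"
    and lip: "\<And>x y. \<bar>gauss_dens s x - gauss_dens s y\<bar> \<le> L * \<bar>x - y\<bar>"
    and "continuous_on UNIV \<phi>" "integrable lborel \<phi>" "\<And>y. \<phi> y \<ge> 0"
    and supp: "\<And>y. \<bar>y - u\<bar> > R \<Longrightarrow> \<phi> y = 0"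
  shows "\<bar>(LINT y|lborel. gauss_dens s (y / sN) * \<phi> y) - gauss_dens s (u / sN) * (LINT y|lborel. \<phi> y)\<bar>
          \<le> L * R / sN * (LINT y|lborel. \<phi> y)"
proof -
  obtain B where B: "\<And>z. \<bar>poly 1 z * gauss_dens s z\<bar> \<le> B" using poly_gauss_bound[OF assms(2)] by blast
  have i1: "integrable lborel (\<lambda>y. gauss_dens s (y / sN) * \<phi> y)"
    using gterm_bound(1)[OF assms(1,2) B assms(6,7)] by simp
  have i2: "integrable lborel (\<lambda>y. gauss_dens s (u / sN) * \<phi> y)"
    by (intro integrable_mult_right assms(7))
  have eq: "(LINT y|lborel. gauss_dens s (y / sN) * \<phi> y) - gauss_dens s (u / sN) * (LINT y|lborel. \<phi> y)
     = (LINT y|lborel. (gauss_dens s (y / sN) - gauss_dens s (u / sN)) * \<phi> y)"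
    using i1 i2 by (simp add: left_diff_distrib Bochner_Integration.integral_diff)
  have pt: "\<bar>(gauss_dens s (y / sN) - gauss_dens s (u / sN)) * \<phi> y\<bar> \<le> L * R / sN * \<phi> y" for y
  proof (cases "\<bar>y - u\<bar> > R")
    case True then show ?thesis using supp by simp
  next
    case False
    have "\<bar>gauss_dens s (y / sN) - gauss_dens s (u / sN)\<bar> \<le> L * \<bar>y / sN - u / sN\<bar>" by (rule lip)
    also have "\<bar>y / sN - u / sN\<bar> = \<bar>y - u\<bar> / sN" using assms(1) by (simp add: diff_divide_distrib[symmetric])
    also have "L * (\<bar>y - u\<bar> / sN) \<le> L * (R / sN)"
      using False assms by (intro mult_left_mono divide_right_mono) auto
    finally have "\<bar>gauss_dens s (y / sN) - gauss_dens s (u / sN)\<bar> \<le> L * R / sN" by simp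
    then have "\<bar>gauss_dens s (y / sN) - gauss_dens s (u / sN)\<bar> * \<phi> y \<le> L * R / sN * \<phi> y"
      using assms(8)[of y] by (rule mult_right_mono)
    then show ?thesis using assms(8)[of y] by (simp add: abs_mult)
  qed
  have "\<bar>LINT y|lborel. (gauss_dens s (y / sN) - gauss_dens s (u / sN)) * \<phi> y\<bar>
      \<le> (LINT y|lborel. \<bar>(gauss_dens s (y / sN) - gauss_dens s (u / sN)) * \<phi> y\<bar>)"
    by (rule integral_abs_bound)
  also have "\<dots> \<le> (LINT y|lborel. L * R / sN * \<phi> y)"
  proof (intro integral_mono pt integrable_mult_right assms(7) integrable_abs)
    show "integrable lborel (\<lambda>y. (gauss_dens s (y / sN) - gauss_dens s (u / sN)) * \<phi> y)"
      using i1 i2 by (simp add: left_diff_distrib)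
  qed
  also have "\<dots> = L * R / sN * (LINT y|lborel. \<phi> y)" by simp
  finally show ?thesis unfolding eq .
qed




lemma powr_le_inv_sqrt:
  assumes "Nr \<ge> 1" "p \<ge> 1" shows "Nr powr (- real p / 2) \<le> 1 / sqrt Nr"
proof -
  have "Nr powr (- real p / 2) \<le> Nr powr (- 1 / 2)"
    by (rule powr_mono) (use assms in auto)
  also have "Nr powr (- 1 / 2) = 1 / sqrt Nr"
    using assms by (simp add: powr_minus_divide powr_half_sqrt)
  finally show ?thesis .
qed

lemma sqrt_powr_err:
  assumes "Nr \<ge> 1" shows "sqrt Nr * Nr powr (- (real r + 1) / 2) = 1 / Nr powr (real r / 2)"
proof -
  have "sqrt Nr = Nr powr (1/2)" using assms by (simp add: powr_half_sqrt)
  then have "sqrt Nr * Nr powr (- (real r + 1) / 2) = Nr powr (1/2 + (- (real r + 1) / 2))"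
    by (simp add: powr_add)
  also have "1/2 + (- (real r + 1) / 2) = - (real r / 2)" by (simp add: field_simps)
  also have "Nr powr (- (real r / 2)) = 1 / Nr powr (real r / 2)" by (simp add: powr_minus_divide)
  finally show ?thesis .
qed


lemma key:
  fixes \<phi> :: "real \<Rightarrow> real" and P :: "nat \<Rightarrow> real poly" and Bf :: "nat \<Rightarrow> real"
  assumes Nr: "Nr \<ge> 1" and s: "s > 0" and ep: "0 < \<epsilon>" "\<epsilon> \<le> 1" and dp: "0 < \<delta>" "\<delta> \<le> 1/2"
    and L: "L \<ge> 0" and lip: "\<And>x y. \<bar>gauss_dens s x - gauss_dens s y\<bar> \<le> L * \<bar>x - y\<bar>"
    and cont: "continuous_on UNIV \<phi>" and int: "integrable lborel \<phi>" and nn: "\<And>y. \<phi> y \<ge> 0"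
    and supp: "\<And>y. \<bar>y - u\<bar> > 2 * \<epsilon> \<Longrightarrow> \<phi> y = 0"
    and lo: "2 * \<epsilon> * (1 - \<delta>) \<le> (LINT y|lborel. \<phi> y)" and hi: "(LINT y|lborel. \<phi> y) \<le> 2 * \<epsilon> * (1 + \<delta>)"
    and Bf: "\<And>p z. \<bar>poly (P p) z * gauss_dens s z\<bar> \<le> Bf p"
    and P0: "P 0 = 1"
    and Kc: "0 \<le> Kc" "Kc \<le> K"
    and EW: "\<bar>E - (\<Sum>p\<le>r. Nr powr (- real p / 2) * (LINT z|lborel. poly (P p) z * gauss_dens s z * \<phi> (z * sqrt Nr)))\<bar>
              \<le> Kc * \<bar>dl\<bar> * Nr powr (- (real r + 1) / 2)"
  shows "\<bar>sqrt Nr / (2 * \<epsilon>) * E - gauss_dens s (u / sqrt Nr)\<bar>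
      \<le> \<delta> * (1 / sqrt (2 * pi * s)) + K * \<bar>dl\<bar> / (2 * \<epsilon> * Nr powr (real r / 2))
         + (3 * L + 3/2 * (\<Sum>p\<le>r. \<bar>Bf p\<bar>)) / sqrt Nr"
proof -
  define sN where "sN = sqrt Nr"
  have sN: "sN > 0" "sN * sN = Nr" using Nr by (auto simp: sN_def)
  define T where "T p = (LINT z|lborel. poly (P p) z * gauss_dens s z * \<phi> (z * sN))" for p
  define I where "I p = (LINT y|lborel. poly (P p) (y / sN) * gauss_dens s (y / sN) * \<phi> y)" for p
  define A where "A = (\<Sum>p\<le>r. Nr powr (- real p / 2) * T p)"
  define g0 where "g0 = 1 / sqrt (2 * pi * s)"
  define gu where "gu = gauss_dens s (u / sN)"
  define J where "J = (LINT y|lborel. \<phi> y)"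
  have gu: "0 \<le> gu" "gu \<le> g0" using gauss_pos[OF s] gauss_le[OF s] by (auto simp: gu_def g0_def less_imp_le)
  have TI: "T p = I p / sN" for p
    unfolding T_def I_def using gterm_subst[OF sN(1)] by simp
  have e3: "2 * \<epsilon> * (1 + \<delta>) \<le> 3 * \<epsilon>"
  proof -
    have "2 * \<epsilon> * (1 + \<delta>) \<le> 2 * \<epsilon> * (3/2)" using dp ep by (intro mult_left_mono) auto
    then show ?thesis by simp
  qed
  have absphi: "(LINT y|lborel. \<bar>\<phi> y\<bar>) = (LINT y|lborel. \<phi> y)"
    using nn by (simp add: abs_of_nonneg)
  have L1: "(LINT y|lborel. \<bar>\<phi> y\<bar>) \<le> 3 * \<epsilon>"
    unfolding absphi using hi e3 by linarith
  have Ibd: "\<bar>I p\<bar> \<le> \<bar>Bf p\<bar> * (3 * \<epsilon>)" for p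
  proof -
    have "\<bar>I p\<bar> \<le> Bf p * (LINT y|lborel. \<bar>\<phi> y\<bar>)"
      unfolding I_def by (rule gterm_bound(2)[OF sN(1) s Bf cont int])
    also have "\<dots> \<le> \<bar>Bf p\<bar> * (3 * \<epsilon>)"
      using L1 by (intro mult_mono) auto
    finally show ?thesis .
  qed
  have hip: "\<bar>Nr powr (- real p / 2) * T p\<bar> \<le> \<bar>Bf p\<bar> * (3 * \<epsilon>) / Nr" if "p \<ge> 1" for p
  proof -
    have "\<bar>Nr powr (- real p / 2) * T p\<bar> = Nr powr (- real p / 2) * (\<bar>I p\<bar> / sN)"
      using sN by (simp add: TI abs_mult)
    also have "\<dots> \<le> (1 / sN) * (\<bar>Bf p\<bar> * (3 * \<epsilon>) / sN)"
      using powr_le_inv_sqrt[OF Nr that] Ibd[of p] sN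
      by (intro mult_mono divide_right_mono) (auto simp: sN_def)
    also have "\<dots> = \<bar>Bf p\<bar> * (3 * \<epsilon>) / Nr" using sN by (simp add: field_simps)
    finally show ?thesis .
  qed
  define H where "H = (\<Sum>p\<in>{..r} - {0}. Nr powr (- real p / 2) * T p)"
  have Hbd: "\<bar>H\<bar> \<le> (\<Sum>p\<le>r. \<bar>Bf p\<bar>) * (3 * \<epsilon>) / Nr"
  proof -
    have "\<bar>H\<bar> \<le> (\<Sum>p\<in>{..r} - {0}. \<bar>Nr powr (- real p / 2) * T p\<bar>)" unfolding H_def by (rule sum_abs)
    also have "\<dots> \<le> (\<Sum>p\<in>{..r} - {0}. \<bar>Bf p\<bar> * (3 * \<epsilon>) / Nr)"
      by (intro sum_mono hip) auto
    also have "\<dots> \<le> (\<Sum>p\<le>r. \<bar>Bf p\<bar> * (3 * \<epsilon>) / Nr)"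
      using ep Nr by (intro sum_mono2) auto
    also have "\<dots> = (\<Sum>p\<le>r. \<bar>Bf p\<bar>) * (3 * \<epsilon>) / Nr"
      by (simp add: sum_divide_distrib sum_distrib_right)
    finally show ?thesis .
  qed
  have Asplit: "A = T 0 + H"
    unfolding A_def H_def using Nr by (subst sum.remove[of _ 0]) auto
  have I0: "I 0 = (LINT y|lborel. gauss_dens s (y / sN) * \<phi> y)"
    unfolding I_def P0 by simp
  have main: "\<bar>I 0 - gu * J\<bar> \<le> L * (2 * \<epsilon>) / sN * J"
    unfolding I0 gu_def J_def
    by (rule main_term[OF sN(1) s L _ lip cont int nn supp]) (use ep in auto)
  have J3: "J \<le> 3 * \<epsilon>" "0 \<le> J" using L1 absphi nn by (auto simp: J_def)
  have X1: "\<bar>sN / (2 * \<epsilon>) * (E - A)\<bar> \<le> K * \<bar>dl\<bar> / (2 * \<epsilon> * Nr powr (real r / 2))"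
  proof -
    have "\<bar>sN / (2 * \<epsilon>) * (E - A)\<bar> = sN / (2 * \<epsilon>) * \<bar>E - A\<bar>" using sN ep by (simp add: abs_mult)
    also have "\<dots> \<le> sN / (2 * \<epsilon>) * (K * \<bar>dl\<bar> * Nr powr (- (real r + 1) / 2))"
    proof (intro mult_left_mono)
      have "\<bar>E - A\<bar> \<le> Kc * \<bar>dl\<bar> * Nr powr (- (real r + 1) / 2)"
        using EW by (simp add: A_def T_def sN_def)
      also have "\<dots> \<le> K * \<bar>dl\<bar> * Nr powr (- (real r + 1) / 2)"
        using Kc by (intro mult_right_mono) auto
      finally show "\<bar>E - A\<bar> \<le> K * \<bar>dl\<bar> * Nr powr (- (real r + 1) / 2)" .
    qed (use sN ep in auto)
    also have "\<dots> = K * \<bar>dl\<bar> / (2 * \<epsilon>) * (sN * Nr powr (- (real r + 1) / 2))" by simp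
    also have "\<dots> = K * \<bar>dl\<bar> / (2 * \<epsilon> * Nr powr (real r / 2))"
      unfolding sN_def sqrt_powr_err[OF Nr] by simp
    finally show ?thesis .
  qed
  have X2: "\<bar>sN / (2 * \<epsilon>) * H\<bar> \<le> 3/2 * (\<Sum>p\<le>r. \<bar>Bf p\<bar>) / sN"
  proof -
    have "\<bar>sN / (2 * \<epsilon>) * H\<bar> = sN / (2 * \<epsilon>) * \<bar>H\<bar>" using sN ep by (simp add: abs_mult)
    also have "\<dots> \<le> sN / (2 * \<epsilon>) * ((\<Sum>p\<le>r. \<bar>Bf p\<bar>) * (3 * \<epsilon>) / Nr)"
      using Hbd sN ep by (intro mult_left_mono) auto
    also have "\<dots> = 3/2 * (\<Sum>p\<le>r. \<bar>Bf p\<bar>) / sN"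
      using sN ep by (simp add: field_simps flip: sN(2))
    finally show ?thesis .
  qed
  have X3: "\<bar>I 0 / (2 * \<epsilon>) - gu * J / (2 * \<epsilon>)\<bar> \<le> 3 * L / sN"
  proof -
    have "\<bar>I 0 / (2 * \<epsilon>) - gu * J / (2 * \<epsilon>)\<bar> = \<bar>I 0 - gu * J\<bar> / (2 * \<epsilon>)"
      using ep by (simp add: diff_divide_distrib[symmetric])
    also have "\<dots> \<le> L * (2 * \<epsilon>) / sN * J / (2 * \<epsilon>)"
      using main ep by (intro divide_right_mono) auto
    also have "\<dots> = L * J / sN" using ep by simp
    also have "\<dots> \<le> L * (3 * \<epsilon>) / sN" using J3 L sN by (intro divide_right_mono mult_left_mono) auto
    also have "\<dots> \<le> L * 3 / sN" using ep L sN by (intro divide_right_mono mult_left_mono) auto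
    finally show ?thesis by simp
  qed
  have X4: "\<bar>gu * J / (2 * \<epsilon>) - gu\<bar> \<le> \<delta> * g0"
  proof -
    have "\<bar>J / (2 * \<epsilon>) - 1\<bar> \<le> \<delta>"
    proof -
      have "J / (2 * \<epsilon>) \<le> 1 + \<delta>" using hi ep by (simp add: J_def divide_le_eq mult.commute)
      moreover have "1 - \<delta> \<le> J / (2 * \<epsilon>)" using lo ep by (simp add: J_def le_divide_eq mult.commute)
      ultimately show ?thesis by linarith
    qed
    have "gu * J / (2 * \<epsilon>) - gu = gu * (J / (2 * \<epsilon>) - 1)" by (simp add: algebra_simps)
    then have "\<bar>gu * J / (2 * \<epsilon>) - gu\<bar> = gu * \<bar>J / (2 * \<epsilon>) - 1\<bar>"
      using gu by (simp add: abs_mult)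
    also have "\<dots> \<le> g0 * \<delta>" using gu \<open>\<bar>J / (2 * \<epsilon>) - 1\<bar> \<le> \<delta>\<close> dp by (intro mult_mono) auto
    finally show ?thesis by (metis mult.commute)
  qed
  have decomp: "sN / (2 * \<epsilon>) * E - gu = sN / (2 * \<epsilon>) * (E - A) + sN / (2 * \<epsilon>) * H
      + (I 0 / (2 * \<epsilon>) - gu * J / (2 * \<epsilon>)) + (gu * J / (2 * \<epsilon>) - gu)"
    using sN ep by (simp add: Asplit TI field_simps)
  have "\<bar>sN / (2 * \<epsilon>) * E - gu\<bar> \<le> K * \<bar>dl\<bar> / (2 * \<epsilon> * Nr powr (real r / 2))
      + 3/2 * (\<Sum>p\<le>r. \<bar>Bf p\<bar>) / sN + 3 * L / sN + \<delta> * g0"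
    unfolding decomp using X1 X2 X3 X4 by linarith
  also have "\<dots> = \<delta> * g0 + K * \<bar>dl\<bar> / (2 * \<epsilon> * Nr powr (real r / 2))
         + (3 * L + 3/2 * (\<Sum>p\<le>r. \<bar>Bf p\<bar>)) / sN" by (simp add: add_divide_distrib)
  finally show ?thesis unfolding sN_def gu_def g0_def .
qed




lemma bump_comp_integrable:
  assumes "finite_measure M" "Z \<in> borel_measurable M" "c > 0"
  shows "integrable M (\<lambda>x. bump a b c (Z x))"
proof (rule finite_measure.integrable_const_bound[OF assms(1), where B=1])
  show "AE x in M. norm (bump a b c (Z x)) \<le> 1" using bump_bounds by simp
  show "(\<lambda>x. bump a b c (Z x)) \<in> borel_measurable M"
    using measurable_compose[OF assms(2) borel_measurable_continuous_onI[OF cont_bump[OF assms(3)]]]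
    by (simp add: o_def)
qed

lemma EW_convert:
  "norm (integral\<^sup>L M (\<lambda>x. cbump a b c (Z x))
            - (\<Sum>p\<le>r. complex_of_real (Nr powr (- real p / 2)) *
                 (LINT z|lborel. complex_of_real (poly (P p) z * gauss_dens s z) * cbump a b c (z * sqrt Nr))))
   = \<bar>integral\<^sup>L M (\<lambda>x. bump a b c (Z x))
      - (\<Sum>p\<le>r. Nr powr (- real p / 2) * (LINT z|lborel. poly (P p) z * gauss_dens s z * bump a b c (z * sqrt Nr)))\<bar>"
proof -
  have h1: "(\<Sum>p\<le>r. complex_of_real (Nr powr (- real p / 2)) *
                 (LINT z|lborel. complex_of_real (poly (P p) z * gauss_dens s z) * cbump a b c (z * sqrt Nr)))
     = complex_of_real (\<Sum>p\<le>r. Nr powr (- real p / 2) * (LINT z|lborel. poly (P p) z * gauss_dens s z * bump a b c (z * sqrt Nr)))"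
    by (simp only: cbump_def of_real_mult[symmetric] integral_complex_of_real of_real_sum)
  have h2: "integral\<^sup>L M (\<lambda>x. cbump a b c (Z x)) = complex_of_real (integral\<^sup>L M (\<lambda>x. bump a b c (Z x)))"
    by (simp add: cbump_def)
  show ?thesis by (simp only: h1 h2 of_real_diff[symmetric] norm_of_real)
qed

lemma gauss_target: assumes "Nr > 0"
  shows "1 / sqrt (2 * pi * s) * exp (- (u^2) / (2 * Nr * s)) = gauss_dens s (u / sqrt Nr)"
  using assms by (simp add: gauss_dens_def power_divide mult.commute mult.left_commute)

lemma div_inv_helper: "(K::real) * d / (2 * a * b) = K / 2 * d * inverse (a * b)"
  unfolding divide_inverse inverse_mult_distrib by (simp only: mult_ac)




lemma max_le_add: "0 \<le> (A::real) \<Longrightarrow> 0 \<le> B \<Longrightarrow> max A B \<le> A + B"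
  by (simp add: max_def)

theorem proposition5p2:
  fixes M :: "'a measure" and X :: "nat \<Rightarrow> 'a \<Rightarrow> real"
    and sigma2 :: real and r :: nat and P :: "nat \<Rightarrow> real poly" and eps :: "nat \<Rightarrow> real"
  assumes "prob_space M"
    and rv: "\<And>n. X n \<in> borel_measurable M"
    and sigma_pos: "sigma2 > 0"
    and r_ge: "r \<ge> 1"
    and mean0: "(\<lambda>N. integral\<^sup>L M (\<lambda>x. (\<Sum>n\<in>{1..N}. X n x) / real N)) \<longlonglongrightarrow> 0"
    and P0: "P 0 = 1"
    and edgeworth: "\<exists>\<delta>::nat \<Rightarrow> real. \<delta> \<longlonglongrightarrow> 0 \<and>
        (\<forall>\<^sub>F N in sequentially. \<forall>f. F10 f \<longrightarrow>
          norm (integral\<^sup>L M (\<lambda>x. f (\<Sum>n\<in>{1..N}. X n x))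
            - (\<Sum>p\<le>r. complex_of_real (real N powr (- real p / 2)) *
                 (LINT z|lborel. complex_of_real (poly (P p) z * gauss_dens sigma2 z) * f (z * sqrt (real N)))))
          \<le> C10 f * \<bar>\<delta> N\<bar> * real N powr (- (real r + 1) / 2))"
    and eps_pos: "\<And>N. eps N > 0"
    and eps_lim: "eps \<longlonglongrightarrow> 0"
    and eps_growth: "filterlim (\<lambda>N. eps N * real N powr (real r / 2)) at_top sequentially"
  shows "\<forall>e>0. \<forall>\<^sub>F N in sequentially. \<forall>u::real.
           \<bar>sqrt (real N) / (2 * eps N) *
              measure M {x \<in> space M. (\<Sum>n\<in>{1..N}. X n x) \<in> {u - eps N <..< u + eps N}}
            - 1 / sqrt (2 * pi * sigma2) * exp (- (u^2) / (2 * real N * sigma2))\<bar> < e"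
proof (intro allI impI)
  fix e :: real assume e: "e > 0"
  interpret prob_space M by fact
  define S where "S N x = (\<Sum>n\<in>{1..N}. X n x)" for N x
  have Smeas: "S N \<in> borel_measurable M" for N
    unfolding S_def[abs_def] by (intro borel_measurable_sum rv)
  obtain dl :: "nat \<Rightarrow> real" where dl: "dl \<longlonglongrightarrow> 0" and EWall: "\<forall>\<^sub>F N in sequentially. \<forall>f. F10 f \<longrightarrow>
          norm (integral\<^sup>L M (\<lambda>x. f (\<Sum>n\<in>{1..N}. X n x))
            - (\<Sum>p\<le>r. complex_of_real (real N powr (- real p / 2)) *
                 (LINT z|lborel. complex_of_real (poly (P p) z * gauss_dens sigma2 z) * f (z * sqrt (real N)))))
          \<le> C10 f * \<bar>dl N\<bar> * real N powr (- (real r + 1) / 2)"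
    using edgeworth by blast
  obtain L0 where L0: "\<And>x y. \<bar>gauss_dens sigma2 x - gauss_dens sigma2 y\<bar> \<le> L0 * \<bar>x - y\<bar>"
    using gauss_lipschitz[OF sigma_pos] by blast
  define L where "L = \<bar>L0\<bar>"
  have L: "L \<ge> 0" "\<And>x y. \<bar>gauss_dens sigma2 x - gauss_dens sigma2 y\<bar> \<le> L * \<bar>x - y\<bar>"
  proof -
    show "L \<ge> 0" by (simp add: L_def)
    fix x y
    have "L0 * \<bar>x - y\<bar> \<le> L * \<bar>x - y\<bar>" unfolding L_def by (intro mult_right_mono) auto
    then show "\<bar>gauss_dens sigma2 x - gauss_dens sigma2 y\<bar> \<le> L * \<bar>x - y\<bar>" using L0[of x y] by linarith
  qed
  have "\<forall>p. \<exists>B. \<forall>z. \<bar>poly (P p) z * gauss_dens sigma2 z\<bar> \<le> B"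
    using poly_gauss_bound[OF sigma_pos] by blast
  then obtain Bf where Bf: "\<And>p z. \<bar>poly (P p) z * gauss_dens sigma2 z\<bar> \<le> Bf p" by metis
  define BB where "BB = (\<Sum>p\<le>r. \<bar>Bf p\<bar>)"
  define g0 where "g0 = 1 / sqrt (2 * pi * sigma2)"
  have g0: "g0 > 0" using sigma_pos by (simp add: g0_def)
  define \<delta> where "\<delta> = min (1/2) (e / (4 * g0))"
  have dp: "0 < \<delta>" "\<delta> \<le> 1/2" "\<delta> * g0 \<le> e / 4"
  proof -
    show "0 < \<delta>" "\<delta> \<le> 1/2" using e g0 by (auto simp: \<delta>_def)
    have "\<delta> * g0 \<le> e / (4 * g0) * g0" using g0 by (intro mult_right_mono) (auto simp: \<delta>_def)
    then show "\<delta> * g0 \<le> e / 4" using g0 by simp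
  qed
  define K where "K = 6 / \<delta> + 12"
  have ev1: "\<forall>\<^sub>F N in sequentially. (1::real) \<le> real N"
    using eventually_ge_at_top[of "1::nat"] by eventually_elim simp
  have ev2: "\<forall>\<^sub>F N in sequentially. eps N < 1"
    using order_tendstoD(2)[OF eps_lim, of 1] by simp
  have ev3: "\<forall>\<^sub>F N in sequentially. K * \<bar>dl N\<bar> / (2 * eps N * real N powr (real r / 2)) < e / 3"
  proof -
    have "((\<lambda>N. K / 2 * \<bar>dl N\<bar> * inverse (eps N * real N powr (real r / 2))) \<longlongrightarrow> K / 2 * 0 * 0) sequentially"
      by (intro tendsto_mult tendsto_const tendsto_rabs_zero dl tendsto_inverse_0_at_top eps_growth)
    then have lim: "((\<lambda>N. K / 2 * \<bar>dl N\<bar> * inverse (eps N * real N powr (real r / 2))) \<longlongrightarrow> 0) sequentially"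
      by (simp only: mult_zero_right mult_zero_left)
    have "\<forall>\<^sub>F N in sequentially. K / 2 * \<bar>dl N\<bar> * inverse (eps N * real N powr (real r / 2)) < e / 3"
      by (rule order_tendstoD(2)[OF lim]) (use e in simp)
    then show ?thesis by eventually_elim (simp only: div_inv_helper)
  qed
  have ev4: "\<forall>\<^sub>F N in sequentially. (3 * L + 3/2 * BB) / sqrt (real N) < e / 3"
  proof -
    have "((\<lambda>N. (3 * L + 3/2 * BB) / sqrt (real N)) \<longlongrightarrow> 0) sequentially"
      by (intro tendsto_divide_0[OF tendsto_const] filterlim_at_top_imp_at_infinity
            filterlim_compose[OF sqrt_at_top filterlim_real_sequentially])
    then show ?thesis by (rule order_tendstoD(2)) (use e in simp)
  qed
  show "\<forall>\<^sub>F N in sequentially. \<forall>u::real.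
           \<bar>sqrt (real N) / (2 * eps N) *
              measure M {x \<in> space M. (\<Sum>n\<in>{1..N}. X n x) \<in> {u - eps N <..< u + eps N}}
            - 1 / sqrt (2 * pi * sigma2) * exp (- (u^2) / (2 * real N * sigma2))\<bar> < e"
    using ev1 ev2 ev3 ev4 EWall
  proof eventually_elim
    case (elim N)
    note N1 = elim(1) and e1 = elim(2) and err = elim(3) and tail = elim(4) and EWf = elim(5)
    define Nr where "Nr = real N"
    define sN where "sN = sqrt Nr"
    have sN: "sN > 0" using N1 by (simp add: sN_def Nr_def)
    have ep: "0 < eps N" "eps N \<le> 1" using eps_pos[of N] e1 by auto
    define c where "c = \<delta> * eps N"
    have c: "c > 0" "c \<le> eps N / 2" using dp ep by (auto simp: c_def)
    define Bnd where "Bnd = \<delta> * g0 + K * \<bar>dl N\<bar> / (2 * eps N * Nr powr (real r / 2)) + (3 * L + 3/2 * BB) / sN"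
    have Bnd: "Bnd < e" using e dp err tail unfolding Bnd_def Nr_def sN_def by linarith
    show ?case
    proof
      fix u :: real
      have appl: "\<bar>sN / (2 * eps N) * integral\<^sup>L M (\<lambda>x. bump a b c (S N x)) - gauss_dens sigma2 (u / sN)\<bar> \<le> Bnd"
        if ab: "a \<le> b" and lo: "2 * eps N * (1 - \<delta>) \<le> (LINT y|lborel. bump a b c y)"
          and hi: "(LINT y|lborel. bump a b c y) \<le> 2 * eps N * (1 + \<delta>)"
          and sp: "\<And>y. \<bar>y - u\<bar> > 2 * eps N \<Longrightarrow> y \<notin> {a - c<..<b + c}"
          and CK: "C10 (cbump a b c) \<le> K" for a b
      proof -
        have F: "F10 (cbump a b c)" by (rule cbump_F10[OF c(1)])
        have EW0: "\<bar>integral\<^sup>L M (\<lambda>x. bump a b c (S N x))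
             - (\<Sum>p\<le>r. Nr powr (- real p / 2) * (LINT z|lborel. poly (P p) z * gauss_dens sigma2 z * bump a b c (z * sqrt Nr)))\<bar>
             \<le> C10 (cbump a b c) * \<bar>dl N\<bar> * Nr powr (- (real r + 1) / 2)"
        proof -
          have h: "norm (integral\<^sup>L M (\<lambda>x. cbump a b c (\<Sum>n\<in>{1..N}. X n x))
            - (\<Sum>p\<le>r. complex_of_real (real N powr (- real p / 2)) *
                 (LINT z|lborel. complex_of_real (poly (P p) z * gauss_dens sigma2 z) * cbump a b c (z * sqrt (real N)))))
          \<le> C10 (cbump a b c) * \<bar>dl N\<bar> * real N powr (- (real r + 1) / 2)"
            using EWf F by blast
          show ?thesis
            using h EW_convert[where M=M and a=a and b=b and c=c and Z="\<lambda>x. \<Sum>n\<in>{1..N}. X n x" and r=r and Nr="real N" and P=P and s=sigma2]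
            unfolding S_def Nr_def by metis
        qed
        have C0: "0 \<le> C10 (cbump a b c)" unfolding C10_def by (intro add_nonneg_nonneg max.coboundedI1 integral_nonneg_AE) auto
        show ?thesis unfolding Bnd_def BB_def g0_def sN_def
        proof (rule key[where \<phi>="bump a b c" and P=P and Bf=Bf and Kc="C10 (cbump a b c)"])
          show "1 \<le> Nr" using N1 by (simp add: Nr_def)
          show "\<And>y. \<bar>y - u\<bar> > 2 * eps N \<Longrightarrow> bump a b c y = 0" using sp bump_out[OF c(1)] by blast
        qed (use sigma_pos ep dp L cont_bump[OF c(1)] bump_integrable[OF c(1)] bump_bounds lo hi Bf P0 C0 CK EW0 in auto)
      qed
      define Aset where "Aset = {x \<in> space M. (\<Sum>n\<in>{1..N}. X n x) \<in> {u - eps N <..< u + eps N}}"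
      have Aset_eq: "Aset = S N -` {u - eps N <..< u + eps N} \<inter> space M" by (auto simp: Aset_def S_def)
      have Asets: "Aset \<in> sets M" unfolding Aset_eq by (rule measurable_sets[OF Smeas]) simp
      have mu: "measure M Aset = integral\<^sup>L M (indicator Aset)"
        using Asets by (simp add: Int_absorb2 sets.sets_into_space)
      have intA: "integrable M (indicator Aset :: 'a \<Rightarrow> real)"
        by (rule integrable_real_indicator[OF Asets]) (simp add: less_top[symmetric])
      define al where "al = u - eps N + c"
      define bl where "bl = u + eps N - c"
      have lo_le: "integral\<^sup>L M (\<lambda>x. bump al bl c (S N x)) \<le> measure M Aset"
        unfolding mu
      proof (rule integral_mono[OF bump_comp_integrable[OF finite_measure_axioms Smeas c(1)] intA])
        fix x assume x: "x \<in> space M"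
        show "bump al bl c (S N x) \<le> indicator Aset x"
        proof (cases "x \<in> Aset")
          case True then show ?thesis using bump_bounds by simp
        next
          case False
          then have "S N x \<notin> {al - c<..<bl + c}" using x by (auto simp: Aset_def S_def al_def bl_def)
          then show ?thesis using bump_out[OF c(1)] False by simp
        qed
      qed
      have lower: "\<bar>sN / (2 * eps N) * integral\<^sup>L M (\<lambda>x. bump al bl c (S N x)) - gauss_dens sigma2 (u / sN)\<bar> \<le> Bnd"
      proof (rule appl)
        show ab: "al \<le> bl" using c by (simp add: al_def bl_def)
        have "2 * eps N * (1 - \<delta>) = bl - al" by (simp add: al_def bl_def c_def algebra_simps)
        then show "2 * eps N * (1 - \<delta>) \<le> (LINT y|lborel. bump al bl c y)" using bump_int_lower[OF c(1) ab] by simp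
        have "bl - al + 2 * c = 2 * eps N" by (simp add: al_def bl_def)
        moreover have "2 * eps N \<le> 2 * eps N * (1 + \<delta>)" using dp ep by simp
        ultimately show "(LINT y|lborel. bump al bl c y) \<le> 2 * eps N * (1 + \<delta>)"
          using bump_int_upper[OF c(1) ab] by simp
        show "\<And>y. \<bar>y - u\<bar> > 2 * eps N \<Longrightarrow> y \<notin> {al - c<..<bl + c}" using ep by (auto simp: al_def bl_def)
        have "C10 (cbump al bl c) \<le> max (bl - al + 2 * c) (3 / c * (bl - al + 2 * c)) + (bl - al + 2 * c)"
          by (rule cbump_C10[OF c(1) ab])
        also have "bl - al + 2 * c = 2 * eps N" by (simp add: al_def bl_def)
        also have "3 / c * (2 * eps N) = 6 / \<delta>" using ep dp by (simp add: c_def field_simps)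
        also have "max (2 * eps N) (6 / \<delta>) + 2 * eps N \<le> 2 + 6 / \<delta> + 2"
        proof -
          have "0 \<le> 6 / \<delta>" using dp by simp
          then show ?thesis using ep max_le_add[of "2 * eps N" "6 / \<delta>"] by linarith
        qed
        also have "\<dots> \<le> K" by (simp add: K_def)
        finally show "C10 (cbump al bl c) \<le> K" .
      qed
      define au where "au = u - eps N"
      define bu where "bu = u + eps N"
      have hi_ge: "measure M Aset \<le> integral\<^sup>L M (\<lambda>x. bump au bu c (S N x))"
        unfolding mu
      proof (rule integral_mono[OF intA bump_comp_integrable[OF finite_measure_axioms Smeas c(1)]])
        fix x assume x: "x \<in> space M"
        show "indicator Aset x \<le> bump au bu c (S N x)"
        proof (cases "x \<in> Aset")
          case True
          then have "au \<le> S N x" "S N x \<le> bu" by (auto simp: Aset_def S_def au_def bu_def)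
          then show ?thesis using bump_in[OF c(1)] True by simp
        next
          case False then show ?thesis using bump_bounds by simp
        qed
      qed
      have upper: "\<bar>sN / (2 * eps N) * integral\<^sup>L M (\<lambda>x. bump au bu c (S N x)) - gauss_dens sigma2 (u / sN)\<bar> \<le> Bnd"
      proof (rule appl)
        show ab: "au \<le> bu" using ep by (simp add: au_def bu_def)
        have "2 * eps N * (1 - \<delta>) \<le> 2 * eps N" using dp ep by simp
        also have "2 * eps N = bu - au" by (simp add: au_def bu_def)
        finally show "2 * eps N * (1 - \<delta>) \<le> (LINT y|lborel. bump au bu c y)" using bump_int_lower[OF c(1) ab] by simp
        have "bu - au + 2 * c = 2 * eps N * (1 + \<delta>)" by (simp add: au_def bu_def c_def algebra_simps)
        then show "(LINT y|lborel. bump au bu c y) \<le> 2 * eps N * (1 + \<delta>)"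
          using bump_int_upper[OF c(1) ab] by simp
        show "\<And>y. \<bar>y - u\<bar> > 2 * eps N \<Longrightarrow> y \<notin> {au - c<..<bu + c}" using c by (auto simp: au_def bu_def)
        have "C10 (cbump au bu c) \<le> max (bu - au + 2 * c) (3 / c * (bu - au + 2 * c)) + (bu - au + 2 * c)"
          by (rule cbump_C10[OF c(1) ab])
        also have "bu - au + 2 * c = 2 * eps N + 2 * c" by (simp add: au_def bu_def)
        also have "3 / c * (2 * eps N + 2 * c) = 6 / \<delta> + 6" using ep dp by (simp add: c_def field_simps)
        also have "max (2 * eps N + 2 * c) (6 / \<delta> + 6) + (2 * eps N + 2 * c) \<le> 3 + (6 / \<delta> + 6) + 3"
        proof -
          have "0 \<le> 6 / \<delta>" using dp by simp
          then show ?thesis using ep c max_le_add[of "2 * eps N + 2 * c" "6 / \<delta> + 6"] by linarith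
        qed
        also have "\<dots> \<le> K" by (simp add: K_def)
        finally show "C10 (cbump au bu c) \<le> K" .
      qed
      have pos: "sN / (2 * eps N) > 0" using sN ep by simp
      have m1: "sN / (2 * eps N) * integral\<^sup>L M (\<lambda>x. bump al bl c (S N x)) \<le> sN / (2 * eps N) * measure M Aset"
        using lo_le pos by (intro mult_left_mono) auto
      have m2: "sN / (2 * eps N) * measure M Aset \<le> sN / (2 * eps N) * integral\<^sup>L M (\<lambda>x. bump au bu c (S N x))"
        using hi_ge pos by (intro mult_left_mono) auto
      have "\<bar>sN / (2 * eps N) * measure M Aset - gauss_dens sigma2 (u / sN)\<bar> \<le> Bnd"
        using lower upper m1 m2 by (simp add: abs_le_iff)
      moreover have "1 / sqrt (2 * pi * sigma2) * exp (- (u^2) / (2 * real N * sigma2)) = gauss_dens sigma2 (u / sN)"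
        unfolding sN_def Nr_def by (rule gauss_target) (use N1 in simp)
      ultimately show "\<bar>sqrt (real N) / (2 * eps N) *
              measure M {x \<in> space M. (\<Sum>n\<in>{1..N}. X n x) \<in> {u - eps N <..< u + eps N}}
            - 1 / sqrt (2 * pi * sigma2) * exp (- (u^2) / (2 * real N * sigma2))\<bar> < e"
        using Bnd unfolding Aset_def sN_def Nr_def by linarith
    qed
  qed
qed


end
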